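(* Let $p\ge0$, $q\ge1$, $\mathbf{k}=(k_1,\dots,k_r)$ with $k_i\ge1$, and let $\tilde V$ denote $\tilde V_{\mathbf{k}}(\mathbb{R}^{p,q})$ if $q\ge2$, or a fixed component $\tilde V_{\mathbf{k}}(\mathbb{R}^{p,1})_\Sigma$ if $q=1$. Let $\tilde V^\infty=\tilde V\cup\{\infty\}$ be its one-point compactification. For every $\lambda\in\mathbb{P}(\mathbf{k})$, the subspace $F_\lambda\subseteq\tilde V^\infty$ consisting of $\infty$ together with all $Z\in\tilde V$ with $\omega(Q^Z)\ge\lambda$ is closed in $\tilde V^\infty$.
   Context: $d=p+q$; points of $\mathbb{R}^d$ are written $(\zeta,t)\in\mathbb{R}^{d-1}\times\mathbb{R}$ with projections $\mathrm{pr}_\zeta,\mathrm{pr}_t$; $\mathrm{pr}_1$ is the projection to the first $p$ coordinates. $\tilde V_{\mathbf{k}}(\mathbb{R}^{p,q})\subseteq\prod_i(\mathbb{R}^d)^{k_i}$ consists of tuples $Z=(z_i^j)$ of pairwise distinct points with $\mathrm{pr}_1(z_i^1)=\dots=\mathrm{pr}_1(z_i^{k_i})$ for each $i$; for $q=1$ and $\Sigma=(\sigma_i)\in\prod\mathfrak{S}_{k_i}$, $\tilde V_{\mathbf{k}}(\mathbb{R}^{p,1})_\Sigma$ is the subset where $\mathrm{pr}_t(z_i^{\sigma_i(j)})<\mathrm{pr}_t(z_i^{\sigma_i(j+1)})$ for all $i,j$. Table $T_{\mathbf{k}}=\{(i,j):1\le i\le r,1\le j\le k_i\}$ with lexicographic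 order $<$. A ray partition $Q$ of type $\mathbf{k}$: partition of $T_{\mathbf{k}}$ into nonempty $Q_1,\dots,Q_l$ with total orders $\prec_\beta$, such that $\min(Q_1,<)<\dots<\min(Q_l,<)$ and $\min(Q_\beta,\prec_\beta)=\min(Q_\beta,<)$. It is witnessed by $Z$ if all $z_i^j$, $(i,j)\in Q_\beta$, have the same $\mathrm{pr}_\zeta$, and $(i,j)\prec_\beta(i',j')$ implies $\mathrm{pr}_t(z_i^j)<\mathrm{pr}_t(z_{i'}^{j'})$. Weight $\omega(Q)=(|Q_1|,\dots,|Q_l|)\in\mathbb{P}(\mathbf{k})$, the set of sequences of positive integers summing to $|\mathbf{k}|=\sum k_i$, ordered lexicographically after padding with zeros. For each $Z\in\tilde V$, $Q^Z$ denotes the unique ray partition witnessed by $Z$ of maximal weight among those witnessed by $Z$ (its existence and uniqueness is known). *)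

theory Defs
  imports "HOL-Analysis.Analysis" "HOL-Combinatorics.Permutations"
begin

text \<open>A point of R^d is a function nat => real; its coordinates are indexed by 0,...,d-1
  (all other values are required to be 0 on configurations).
  pr_1 = coordinates 0..<p, pr_zeta = coordinates 0..<d-1, pr_t = coordinate d-1.
  The multi-index k = (k_1,...,k_r) is given by r and k :: nat => nat (k i for 1 <= i <= r).\<close>

type_synonym point = "nat \<Rightarrow> real"
type_synonym config = "nat \<times> nat \<Rightarrow> point"

definition table :: "nat \<Rightarrow> (nat \<Rightarrow> nat) \<Rightarrow> (nat \<times> nat) set" where
  "table r k = {(i, j). 1 \<le> i \<and> i \<le> r \<and> 1 \<le> j \<and> j \<le> k i}"

definition total_size :: "nat \<Rightarrow> (nat \<Rightarrow> nat) \<Rightarrow> nat" where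
  "total_size r k = (\<Sum>i = 1..r. k i)"

definition pr_t :: "nat \<Rightarrow> point \<Rightarrow> real" where
  "pr_t d x = x (d - 1)"

definition same_zeta :: "nat \<Rightarrow> point \<Rightarrow> point \<Rightarrow> bool" where
  "same_zeta d x y \<longleftrightarrow> (\<forall>c < d - 1. x c = y c)"

definition same_pr1 :: "nat \<Rightarrow> point \<Rightarrow> point \<Rightarrow> bool" where
  "same_pr1 p x y \<longleftrightarrow> (\<forall>c < p. x c = y c)"

text \<open>Ambient space prod_i (R^d)^{k_i}, realised inside the product topology on
  configurations: all coordinates outside the table / outside 0..<d vanish.\<close>
definition ambient_top :: "config topology" where
  "ambient_top = product_topology (\<lambda>_. powertop_real UNIV) UNIV"

definition ambient_set :: "nat \<Rightarrow> nat \<Rightarrow> (nat \<Rightarrow> nat) \<Rightarrow> config set" where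
  "ambient_set d r k = {Z. \<forall>a c. (a \<notin> table r k \<or> d \<le> c) \<longrightarrow> Z a c = 0}"

definition Vtilde :: "nat \<Rightarrow> nat \<Rightarrow> nat \<Rightarrow> (nat \<Rightarrow> nat) \<Rightarrow> config set" where
  "Vtilde p q r k = {Z \<in> ambient_set (p + q) r k.
      (\<forall>a \<in> table r k. \<forall>b \<in> table r k. a \<noteq> b \<longrightarrow> Z a \<noteq> Z b) \<and>
      (\<forall>i j j'. (i, j) \<in> table r k \<and> (i, j') \<in> table r k \<longrightarrow> same_pr1 p (Z (i, j)) (Z (i, j')))}"

text \<open>The component tilde V_k(R^{p,1})_Sigma, Sigma = (sigma_i), sigma_i a permutation of {1..k_i}.\<close>
definition Vtilde_comp :: "nat \<Rightarrow> nat \<Rightarrow> (nat \<Rightarrow> nat) \<Rightarrow> (nat \<Rightarrow> nat \<Rightarrow> nat) \<Rightarrow> config set" where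
  "Vtilde_comp p r k \<sigma> = {Z \<in> Vtilde p 1 r k.
      \<forall>i j. 1 \<le> i \<and> i \<le> r \<and> 1 \<le> j \<and> j < k i \<longrightarrow>
        pr_t (p + 1) (Z (i, \<sigma> i j)) < pr_t (p + 1) (Z (i, \<sigma> i (j + 1)))}"

definition Vspace :: "nat \<Rightarrow> nat \<Rightarrow> nat \<Rightarrow> (nat \<Rightarrow> nat) \<Rightarrow> (nat \<Rightarrow> nat \<Rightarrow> nat) \<Rightarrow> config set" where
  "Vspace p q r k \<sigma> = (if q = 1 then Vtilde_comp p r k \<sigma> else Vtilde p q r k)"

definition lexless :: "nat \<times> nat \<Rightarrow> nat \<times> nat \<Rightarrow> bool" where
  "lexless a b \<longleftrightarrow> fst a < fst b \<or> (fst a = fst b \<and> snd a < snd b)"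

text \<open>A ray partition of type k: a list of blocks Q_1,...,Q_l, each block given as a
  list listing its elements in the order \<prec>_beta (a total order on a finite set is the same
  as a duplicate-free enumeration).\<close>
definition ray_partition :: "nat \<Rightarrow> (nat \<Rightarrow> nat) \<Rightarrow> (nat \<times> nat) list list \<Rightarrow> bool" where
  "ray_partition r k Q \<longleftrightarrow>
     distinct (concat Q) \<and> set (concat Q) = table r k \<and>
     (\<forall>B \<in> set Q. B \<noteq> []) \<and>
     (\<forall>B \<in> set Q. \<forall>a \<in> set B. a \<noteq> hd B \<longrightarrow> lexless (hd B) a) \<and>
     sorted_wrt lexless (map hd Q)"

definition witnessed :: "nat \<Rightarrow> config \<Rightarrow> (nat \<times> nat) list list \<Rightarrow> bool" where
  "witnessed d Z Q \<longleftrightarrow>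
     (\<forall>B \<in> set Q. (\<forall>a \<in> set B. \<forall>b \<in> set B. same_zeta d (Z a) (Z b)) \<and>
                  sorted_wrt (\<lambda>a b. pr_t d (Z a) < pr_t d (Z b)) B)"

definition weight :: "(nat \<times> nat) list list \<Rightarrow> nat list" where
  "weight Q = map length Q"

definition Pk :: "nat \<Rightarrow> (nat \<Rightarrow> nat) \<Rightarrow> nat list set" where
  "Pk r k = {l. (\<forall>x \<in> set l. 0 < x) \<and> sum_list l = total_size r k}"

definition padded :: "nat list \<Rightarrow> nat \<Rightarrow> nat" where
  "padded l n = (if n < length l then l ! n else 0)"

definition weight_le :: "nat list \<Rightarrow> nat list \<Rightarrow> bool" where
  "weight_le l m \<longleftrightarrow> padded l = padded m \<or>
     (\<exists>n. (\<forall>n' < n. padded l n' = padded m n') \<and> padded l n < padded m n)"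

definition QZ :: "nat \<Rightarrow> nat \<Rightarrow> (nat \<Rightarrow> nat) \<Rightarrow> config \<Rightarrow> (nat \<times> nat) list list" where
  "QZ d r k Z = (THE Q. ray_partition r k Q \<and> witnessed d Z Q \<and>
      (\<forall>Q'. ray_partition r k Q' \<and> witnessed d Z Q' \<longrightarrow> weight_le (weight Q') (weight Q)))"

text \<open>F_lambda inside the one-point compactification (None = infinity).\<close>
definition F_lambda :: "nat \<Rightarrow> nat \<Rightarrow> nat \<Rightarrow> (nat \<Rightarrow> nat) \<Rightarrow> (nat \<Rightarrow> nat \<Rightarrow> nat) \<Rightarrow> nat list
    \<Rightarrow> config option set" where
  "F_lambda p q r k \<sigma> lam = insert None
     (Some ` {Z \<in> Vspace p q r k \<sigma>. weight_le lam (weight (QZ (p + q) r k Z))})"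

end

theory Submission imports Defs begin

lemma lexless_irrefl: "\<not> lexless a a" by (auto simp: lexless_def)
lemma lexless_trans: "lexless a b \<Longrightarrow> lexless b c \<Longrightarrow> lexless a c" by (auto simp: lexless_def)
lemma lexless_total: "a \<noteq> b \<Longrightarrow> lexless a b \<or> lexless b a"
  by (cases a; cases b) (auto simp: lexless_def)

lemma lex_min_exists:
  assumes "finite A" "A \<noteq> {}"
  obtains a0 where "a0 \<in> A" "\<And>a. a \<in> A \<Longrightarrow> a \<noteq> a0 \<Longrightarrow> lexless a0 a"
proof -
  define i0 where "i0 = Min (fst ` A)"
  have i0: "i0 \<in> fst ` A" using assms by (simp add: i0_def)
  have fa: "finite {j. (i0, j) \<in> A}"
    using finite_imageI[OF assms(1), of snd] by (rule finite_subset[rotated]) force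
  define j0 where "j0 = Min {j. (i0, j) \<in> A}"
  have "{j. (i0, j) \<in> A} \<noteq> {}" using i0 by force
  hence j0: "(i0, j0) \<in> A" using Min_in[OF fa] j0_def by auto
  show ?thesis
  proof (rule that[OF j0])
    fix a assume a: "a \<in> A" "a \<noteq> (i0, j0)"
    have "i0 \<le> fst a" using a assms by (auto simp: i0_def)
    moreover have "fst a = i0 \<Longrightarrow> j0 \<le> snd a" using a fa
      by (auto simp: j0_def intro!: Min_le)
    ultimately show "lexless (i0, j0) a" using a(2) by (cases a) (auto simp: lexless_def)
  qed
qed

lemma sorted_exists:
  fixes f :: "'b \<Rightarrow> real"
  assumes "finite M" "inj_on f M"
  obtains l where "sorted_wrt (<) (map f l)" "set l = M" "length l = card M"
proof -
  interpret folding_insort_key "(\<le>)" "(<)" M f by unfold_locales (rule assms(2))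
  show ?thesis using finite_set_strict_sorted[OF order_refl assms(1)] that by blast
qed

lemma amb_cont: "continuous_map ambient_top euclideanreal (\<lambda>Z. Z a c)"
proof -
  have 1: "continuous_map ambient_top (powertop_real UNIV) (\<lambda>Z. Z a)"
    unfolding ambient_top_def by (rule continuous_map_product_projection) simp
  have 2: "continuous_map (powertop_real UNIV) euclideanreal (\<lambda>f. f c)"
    by (rule continuous_map_product_projection) simp
  show ?thesis using continuous_map_compose[OF 1 2] by (simp add: o_def)
qed

lemma PiEU: "Pi\<^sub>E UNIV (\<lambda>_. UNIV) = UNIV"
  unfolding PiE_UNIV_domain Pi_def by blast

lemma topspace_amb [simp]: "topspace ambient_top = UNIV"
  unfolding ambient_top_def by (simp only: topspace_product_topology topspace_euclidean PiEU)

lemma closed_le_set: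
  "closedin ambient_top {Z. \<forall>x\<in>I. Z (g1 x) (h x) \<le> Z (g2 x) (h x)}"
proof (cases "I = {}")
  case True
  then have "{Z. \<forall>x\<in>I. Z (g1 x) (h x) \<le> Z (g2 x) (h x)} = topspace ambient_top" by simp
  then show ?thesis using closedin_topspace by metis
next
  case False
  have "{Z. \<forall>x\<in>I. Z (g1 x) (h x) \<le> Z (g2 x) (h x)} = (\<Inter>x\<in>I. {Z \<in> topspace ambient_top. (\<lambda>Z. Z (g2 x) (h x) - Z (g1 x) (h x)) Z \<in> {0..}})"
    by auto
  also have "closedin ambient_top \<dots>"
  proof (rule closedin_INT[OF False])
    fix x assume "x \<in> I"
    show "closedin ambient_top {Z \<in> topspace ambient_top. (\<lambda>Z. Z (g2 x) (h x) - Z (g1 x) (h x)) Z \<in> {0..}}"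
      by (rule closedin_continuous_map_preimage)
        (auto intro!: continuous_map_diff amb_cont simp: closed_closedin[symmetric])
  qed
  finally show ?thesis .
qed


lemma padded_Cons0 [simp]: "padded (x # l) 0 = x"
  by (simp add: padded_def)
lemma padded_ConsS [simp]: "padded (x # l) (Suc n) = padded l n"
  by (simp add: padded_def)

lemma padded_Cons_eq: "padded (x # l) = padded (x # m) \<longleftrightarrow> padded l = padded m"
proof
  assume "padded (x # l) = padded (x # m)"
  then have "\<And>n. padded (x # l) (Suc n) = padded (x # m) (Suc n)" by simp
  then show "padded l = padded m" by auto
next
  assume h: "padded l = padded m"
  show "padded (x # l) = padded (x # m)"
  proof
    fix n show "padded (x # l) n = padded (x # m) n" using h by (cases n) auto
  qed
qed

lemma weight_le_Cons_same: "weight_le l m \<Longrightarrow> weight_le (x # l) (x # m)"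
  unfolding weight_le_def
proof (elim disjE exE conjE)
  assume "padded l = padded m"
  then show "padded (x # l) = padded (x # m) \<or>
    (\<exists>n. (\<forall>n'<n. padded (x # l) n' = padded (x # m) n') \<and> padded (x # l) n < padded (x # m) n)"
    using padded_Cons_eq by blast
next
  fix n assume h: "\<forall>n'<n. padded l n' = padded m n'" "padded l n < padded m n"
  have "\<forall>n'<Suc n. padded (x # l) n' = padded (x # m) n'"
  proof (intro allI impI)
    fix n' assume "n' < Suc n" then show "padded (x # l) n' = padded (x # m) n'"
      using h by (cases n') auto
  qed
  then show "padded (x # l) = padded (x # m) \<or>
    (\<exists>n. (\<forall>n'<n. padded (x # l) n' = padded (x # m) n') \<and> padded (x # l) n < padded (x # m) n)"
    using h(2) by (intro disjI2 exI[of _ "Suc n"]) simp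
qed

lemma weight_le_Cons_less: "(x::nat) < y \<Longrightarrow> weight_le (x # l) (y # m) \<and> padded (x # l) \<noteq> padded (y # m)"
  unfolding weight_le_def
  by (metis less_nat_zero_code less_not_refl padded_Cons0)

lemma weight_le_trans: "weight_le l m \<Longrightarrow> weight_le m n \<Longrightarrow> weight_le l n"
  unfolding weight_le_def
proof (elim disjE exE conjE)
  fix n1 n2 assume a: "\<forall>n'<n1. padded l n' = padded m n'" "padded l n1 < padded m n1"
    and b: "\<forall>n'<n2. padded m n' = padded n n'" "padded m n2 < padded n n2"
  show "padded l = padded n \<or> (\<exists>na. (\<forall>n'<na. padded l n' = padded n n') \<and> padded l na < padded n na)"
  proof (rule disjI2, rule exI[of _ "min n1 n2"], intro conjI allI impI)
    fix n' assume "n' < min n1 n2" then show "padded l n' = padded n n'" using a b by simp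
  next
    show "padded l (min n1 n2) < padded n (min n1 n2)"
      using a b by (cases n1 n2 rule: linorder_cases) (auto simp: min_def)
  qed
qed auto

lemma weight_le_antisym: "weight_le l m \<Longrightarrow> weight_le m l \<Longrightarrow> padded l = padded m"
  unfolding weight_le_def
proof (elim disjE exE conjE)
  fix n1 n2 assume a: "\<forall>n'<n1. padded l n' = padded m n'" "padded l n1 < padded m n1"
    and b: "\<forall>n'<n2. padded m n' = padded l n'" "padded m n2 < padded l n2"
  show "padded l = padded m"
    using a b by (cases n1 n2 rule: linorder_cases) auto
qed auto

lemma same_zeta_refl: "same_zeta d x x" by (simp add: same_zeta_def)
lemma same_zeta_sym: "same_zeta d x y \<Longrightarrow> same_zeta d y x" by (simp add: same_zeta_def)
lemma same_zeta_trans: "same_zeta d x y \<Longrightarrow> same_zeta d y z \<Longrightarrow> same_zeta d x z"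
  by (simp add: same_zeta_def)

definition rpA :: "(nat \<times> nat) set \<Rightarrow> (nat \<times> nat) list list \<Rightarrow> bool" where
  "rpA A Q \<longleftrightarrow> distinct (concat Q) \<and> set (concat Q) = A \<and> (\<forall>B\<in>set Q. B \<noteq> []) \<and>
     (\<forall>B\<in>set Q. \<forall>a\<in>set B. a \<noteq> hd B \<longrightarrow> lexless (hd B) a) \<and> sorted_wrt lexless (map hd Q)"

definition goodZ :: "nat \<Rightarrow> config \<Rightarrow> (nat \<times> nat) set \<Rightarrow> bool" where
  "goodZ d Z A \<longleftrightarrow> (\<forall>a\<in>A. \<forall>b\<in>A. a \<noteq> b \<longrightarrow> same_zeta d (Z a) (Z b) \<longrightarrow> pr_t d (Z a) \<noteq> pr_t d (Z b))"

lemma rpA_Cons: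
  assumes "rpA A (B # R)"
  shows "rpA (A - set B) R" "distinct B" "B \<noteq> []" "set B \<subseteq> A"
    "\<forall>B'\<in>set R. lexless (hd B) (hd B')" "\<forall>a\<in>set B. a \<noteq> hd B \<longrightarrow> lexless (hd B) a"
  using assms by (auto simp: rpA_def)

lemma rpA_block: "rpA A Q \<Longrightarrow> B \<in> set Q \<Longrightarrow> distinct B \<and> set B \<subseteq> A"
  unfolding rpA_def by (metis concat.simps(2) concat_append distinct_append set_append split_list le_sup_iff order_refl)

lemma witnessed_Cons: "witnessed d Z (B # R) \<longleftrightarrow>
   ((\<forall>a\<in>set B. \<forall>b\<in>set B. same_zeta d (Z a) (Z b)) \<and> sorted_wrt (\<lambda>a b. pr_t d (Z a) < pr_t d (Z b)) B)
   \<and> witnessed d Z R"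
  by (simp add: witnessed_def)

lemma weight_Cons [simp]: "weight (B # R) = length B # weight R"
  by (simp add: weight_def)


lemma rpA_empty: "rpA {} Q \<Longrightarrow> Q = []"
  by (cases Q) (auto simp: rpA_def)

lemma greedy:
  assumes "finite A" "goodZ d Z A"
  shows "\<exists>G. rpA A G \<and> witnessed d Z G \<and> (\<forall>Q. rpA A Q \<and> witnessed d Z Q \<longrightarrow>
      weight_le (weight Q) (weight G) \<and> (padded (weight Q) = padded (weight G) \<longrightarrow> Q = G))"
  using assms
proof (induction "card A" arbitrary: A rule: less_induct)
  case less
  show ?case
  proof (cases "A = {}")
    case True
    show ?thesis
      by (rule exI[of _ "[]"]) (use True rpA_empty in \<open>auto simp: rpA_def witnessed_def weight_le_def\<close>)
  next
    case False
    obtain a0 where a0: "a0 \<in> A" "\<And>a. a \<in> A \<Longrightarrow> a \<noteq> a0 \<Longrightarrow> lexless a0 a"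
      using lex_min_exists[OF less.prems(1) False] by blast
    define f where "f a = pr_t d (Z a)" for a
    define M where "M = {a\<in>A. same_zeta d (Z a) (Z a0) \<and> f a0 \<le> f a}"
    have MA: "M \<subseteq> A" by (auto simp: M_def)
    have a0M: "a0 \<in> M" using a0 by (auto simp: M_def same_zeta_refl)
    have finM: "finite M" using MA less.prems(1) finite_subset by blast
    have inj: "inj_on f M"
    proof (rule inj_onI, rule ccontr)
      fix a b assume ab: "a \<in> M" "b \<in> M" "f a = f b" "a \<noteq> b"
      have "same_zeta d (Z a) (Z b)" using ab by (auto simp: M_def same_zeta_def)
      then show False using less.prems(2) ab MA by (auto simp: goodZ_def f_def)
    qed
    obtain B0 where B0: "sorted_wrt (<) (map f B0)" "set B0 = M" "length B0 = card M"
      using sorted_exists[OF finM inj] by blast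
    have dB0: "distinct B0" using B0 by (metis card_distinct)
    have B0s: "sorted_wrt (\<lambda>a b. f a < f b) B0" using B0(1) by (simp add: sorted_wrt_map)
    have B0ne: "B0 \<noteq> []" using B0(2) a0M by auto
    have hdB0: "hd B0 = a0"
    proof (cases B0)
      case (Cons x xs)
      show ?thesis
      proof (rule ccontr)
        assume "hd B0 \<noteq> a0"
        then have "a0 \<in> set xs" using Cons B0(2) a0M by auto
        then have "f x < f a0" using B0s Cons by auto
        moreover have "x \<in> M" using Cons B0(2) by auto
        ultimately show False by (auto simp: M_def)
      qed
    qed (use B0ne in auto)
    have cardlt: "card (A - M) < card A"
    proof (rule psubset_card_mono[OF less.prems(1)])
      show "A - M \<subset> A" using a0M a0(1) by blast
    qed
    have goodrest: "goodZ d Z (A - M)" using less.prems(2) by (auto simp: goodZ_def)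
    obtain G' where G': "rpA (A - M) G'" "witnessed d Z G'"
      "\<And>Q. rpA (A - M) Q \<Longrightarrow> witnessed d Z Q \<Longrightarrow>
        weight_le (weight Q) (weight G') \<and> (padded (weight Q) = padded (weight G') \<longrightarrow> Q = G')"
      using less.hyps[OF cardlt _ goodrest] less.prems(1) by blast
    define G where "G = B0 # G'"
    have rpG: "rpA A G"
      unfolding rpA_def G_def
    proof (intro conjI)
      show "distinct (concat (B0 # G'))" using dB0 G'(1) B0(2) by (auto simp: rpA_def)
      show "set (concat (B0 # G')) = A" using G'(1) B0(2) MA by (auto simp: rpA_def)
      show "\<forall>B\<in>set (B0 # G'). B \<noteq> []" using G'(1) B0ne by (auto simp: rpA_def)
      show "\<forall>B\<in>set (B0 # G'). \<forall>a\<in>set B. a \<noteq> hd B \<longrightarrow> lexless (hd B) a"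
        using G'(1) hdB0 B0(2) MA a0(2) by (auto simp: rpA_def)
      have "\<forall>B\<in>set G'. lexless a0 (hd B)"
      proof
        fix B assume B: "B \<in> set G'"
        then have "B \<noteq> []" using G'(1) by (auto simp: rpA_def)
        then have "hd B \<in> set (concat G')" using B hd_in_set by fastforce
        then have "hd B \<in> A - M" using G'(1) by (auto simp: rpA_def)
        then show "lexless a0 (hd B)" using a0(2)[of "hd B"] a0M by auto
      qed
      then show "sorted_wrt lexless (map hd (B0 # G'))" using G'(1) hdB0 by (auto simp: rpA_def)
    qed
    have witG: "witnessed d Z G"
      unfolding G_def witnessed_Cons
    proof (intro conjI)
      show "\<forall>a\<in>set B0. \<forall>b\<in>set B0. same_zeta d (Z a) (Z b)"
        using B0(2) by (auto simp: M_def same_zeta_def)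
      show "sorted_wrt (\<lambda>a b. pr_t d (Z a) < pr_t d (Z b)) B0" using B0s by (simp add: f_def)
      show "witnessed d Z G'" by (rule G'(2))
    qed
    show ?thesis
    proof (rule exI[of _ G], intro conjI allI impI)
      show "rpA A G" by (rule rpG)
      show "witnessed d Z G" by (rule witG)
      fix Q assume Q: "rpA A Q \<and> witnessed d Z Q"
      have "Q \<noteq> []" using Q False by (auto simp: rpA_def)
      then obtain B R where QBR: "Q = B # R" by (cases Q) auto
      note rc = rpA_Cons[OF Q[THEN conjunct1, unfolded QBR]]
      have wB: "\<forall>a\<in>set B. \<forall>b\<in>set B. same_zeta d (Z a) (Z b)"
        "sorted_wrt (\<lambda>a b. f a < f b) B" "witnessed d Z R"
        using Q QBR witnessed_Cons[of d Z B R] by (auto simp: f_def)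
      have below: "a = hd B \<or> lexless (hd B) a" if a: "a \<in> A" for a
      proof -
        have "a \<in> set (concat Q)" using Q a by (auto simp: rpA_def)
        then obtain B' where B': "B' \<in> set Q" "a \<in> set B'" by auto
        show ?thesis
        proof (cases "B' = B")
          case True then show ?thesis using rc(6) B' by auto
        next
          case False
          then have "B' \<in> set R" using B' QBR by auto
          then have "lexless (hd B) (hd B')" "a = hd B' \<or> lexless (hd B') a"
            using rc(5) Q B' by (auto simp: rpA_def)
          then show ?thesis using lexless_trans by blast
        qed
      qed
      have hdB: "hd B = a0"
      proof (rule ccontr)
        assume ne: "hd B \<noteq> a0"
        have "hd B \<in> A" using rc(3,4) by auto
        then have "lexless a0 (hd B)" using a0(2) ne by auto
        moreover have "lexless (hd B) a0" using below[OF a0(1)] ne by auto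
        ultimately show False using lexless_trans lexless_irrefl by blast
      qed
      have setB: "set B \<subseteq> M"
      proof
        fix b assume b: "b \<in> set B"
        have "a0 \<in> set B" using hdB rc(3) hd_in_set by blast
        then have sz: "same_zeta d (Z b) (Z a0)" using wB(1) b by auto
        have "f a0 \<le> f b"
        proof (cases B)
          case (Cons x xs)
          then have "x = a0" using hdB by simp
          then show ?thesis using b Cons wB(2) by auto
        qed (use b in auto)
        then show "b \<in> M" using sz b rc(4) by (auto simp: M_def)
      qed
      have lenB: "length B = card (set B)" using rc(2) by (simp add: distinct_card)
      have lenle: "length B \<le> length B0"
        using lenB B0(3) card_mono[OF finM setB] by simp
      show "weight_le (weight Q) (weight G)"
        and "padded (weight Q) = padded (weight G) \<Longrightarrow> Q = G"
      proof -
        consider "length B < length B0" | "length B = length B0" using lenle by linarith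
        then have "weight_le (weight Q) (weight G) \<and> (padded (weight Q) = padded (weight G) \<longrightarrow> Q = G)"
        proof cases
          case 1
          then show ?thesis using weight_le_Cons_less[OF 1] by (simp add: QBR G_def)
        next
          case 2
          have sBM: "set B = M" using card_subset_eq[OF finM setB] lenB B0(3) 2 by simp
          have "map f B = map f B0"
          proof (rule strict_sorted_equal)
            show "sorted_wrt (<) (map f B0)" by (rule B0(1))
            show "sorted_wrt (<) (map f B)" using wB(2) by (simp add: sorted_wrt_map)
            show "set (map f B) = set (map f B0)" using sBM B0(2) by simp
          qed
          then have BB0: "B = B0" using inj sBM B0(2) inj_on_map_eq_map[of f B B0] by simp
          have "rpA (A - M) R" using rc(1) sBM by simp
          then have ih: "weight_le (weight R) (weight G') \<and> (padded (weight R) = padded (weight G') \<longrightarrow> R = G')"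
            using G'(3) wB(3) by blast
          show ?thesis unfolding QBR G_def BB0 weight_Cons padded_Cons_eq using ih weight_le_Cons_same by blast
        qed
        then show "weight_le (weight Q) (weight G)"
          and "padded (weight Q) = padded (weight G) \<Longrightarrow> Q = G" by blast+
      qed
    qed
  qed
qed


lemma rp_eq: "ray_partition r k = rpA (table r k)"
  by (auto simp: fun_eq_iff ray_partition_def rpA_def)

lemma QZ_props:
  assumes "finite (table r k)" "goodZ d Z (table r k)"
  shows "ray_partition r k (QZ d r k Z) \<and> witnessed d Z (QZ d r k Z) \<and>
    (\<forall>Q'. ray_partition r k Q' \<and> witnessed d Z Q' \<longrightarrow> weight_le (weight Q') (weight (QZ d r k Z)))"
proof -
  obtain G where G: "rpA (table r k) G" "witnessed d Z G"
    "\<And>Q. rpA (table r k) Q \<Longrightarrow> witnessed d Z Q \<Longrightarrow>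
      weight_le (weight Q) (weight G) \<and> (padded (weight Q) = padded (weight G) \<longrightarrow> Q = G)"
    using greedy[OF assms] by blast
  have "QZ d r k Z = G" unfolding QZ_def rp_eq
  proof (rule the_equality)
    show "rpA (table r k) G \<and> witnessed d Z G \<and> (\<forall>Q'. rpA (table r k) Q' \<and> witnessed d Z Q' \<longrightarrow> weight_le (weight Q') (weight G))"
      using G by blast
    fix Q assume Q: "rpA (table r k) Q \<and> witnessed d Z Q \<and> (\<forall>Q'. rpA (table r k) Q' \<and> witnessed d Z Q' \<longrightarrow> weight_le (weight Q') (weight Q))"
    then have 1: "weight_le (weight G) (weight Q)" using G by blast
    have 2: "weight_le (weight Q) (weight G)" using G Q by blast
    have "padded (weight Q) = padded (weight G)" using weight_le_antisym[OF 2 1] .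
    then show "Q = G" using G Q by blast
  qed
  then show ?thesis using G rp_eq by simp
qed

lemma good_V:
  assumes "Z \<in> Vtilde p q r k" "1 \<le> q"
  shows "goodZ (p + q) Z (table r k)"
  unfolding goodZ_def
proof (intro ballI impI notI)
  fix a b assume ab: "a \<in> table r k" "b \<in> table r k" "a \<noteq> b"
    and sz: "same_zeta (p + q) (Z a) (Z b)" and pt: "pr_t (p + q) (Z a) = pr_t (p + q) (Z b)"
  have amb: "Z \<in> ambient_set (p + q) r k" using assms(1) by (simp add: Vtilde_def)
  have "Z a = Z b"
  proof
    fix c
    consider "c < p + q - 1" | "c = p + q - 1" | "p + q \<le> c" using assms(2) by linarith
    then show "Z a c = Z b c"
    proof cases
      case 1 then show ?thesis using sz by (simp add: same_zeta_def)
    next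
      case 2 then show ?thesis using pt by (simp add: pr_t_def)
    next
      case 3
      from amb have h: "\<And>a c. p + q \<le> c \<Longrightarrow> Z a c = 0" unfolding ambient_set_def by blast
      show ?thesis using h[OF 3] by simp
    qed
  qed
  moreover have "\<forall>a\<in>table r k. \<forall>b\<in>table r k. a \<noteq> b \<longrightarrow> Z a \<noteq> Z b"
    using assms(1) unfolding Vtilde_def by blast
  ultimately show False using ab by blast
qed

lemma finite_table: "finite (table r k)"
proof -
  have "table r k = Sigma {1..r} (\<lambda>i. {1..k i})" by (auto simp: table_def)
  then show ?thesis by simp
qed

lemma length_le_concat: "\<forall>B\<in>set Q. B \<noteq> [] \<Longrightarrow> length Q \<le> length (concat Q)"
proof (induction Q)
  case (Cons B R)
  then have "1 \<le> length B" by (cases B) auto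
  then show ?case using Cons by simp
qed simp

lemma fin_rp: "finite {Q. ray_partition r k Q}"
proof -
  define T where "T = table r k"
  define n where "n = card T"
  have "Q \<in> {xs. set xs \<subseteq> {B. set B \<subseteq> T \<and> length B \<le> n} \<and> length xs \<le> n}"
    if "ray_partition r k Q" for Q
  proof -
    from that have Q: "rpA T Q" by (simp add: rp_eq T_def)
    have 1: "set Q \<subseteq> {B. set B \<subseteq> T \<and> length B \<le> n}"
    proof
      fix B assume B: "B \<in> set Q"
      then have "distinct B \<and> set B \<subseteq> T" using rpA_block[OF Q] by blast
      then show "B \<in> {B. set B \<subseteq> T \<and> length B \<le> n}"
        using finite_table card_mono[of T "set B"] distinct_card[of B] by (auto simp: n_def T_def)
    qed
    have "length Q \<le> length (concat Q)" using Q by (intro length_le_concat) (simp add: rpA_def)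
    also have "length (concat Q) = n" using Q distinct_card[of "concat Q"] by (simp add: rpA_def n_def)
    finally have 2: "length Q \<le> n" .
    show ?thesis using 1 2 by simp
  qed
  then have sub: "{Q. ray_partition r k Q} \<subseteq> {xs. set xs \<subseteq> {B. set B \<subseteq> T \<and> length B \<le> n} \<and> length xs \<le> n}"
    by blast
  have finB: "finite {B. set B \<subseteq> T \<and> length B \<le> n}"
    using finite_lists_length_le[OF finite_table] by (simp add: T_def)
  show ?thesis by (rule finite_subset[OF sub finite_lists_length_le[OF finB]])
qed

definition RQ :: "nat \<Rightarrow> (nat \<times> nat) list list \<Rightarrow> ((nat \<times> nat) \<times> (nat \<times> nat) \<times> nat) set" where
  "RQ d Q = {(a, b, c). \<exists>B\<in>set Q. \<exists>i<length B. \<exists>j<length B. a = B ! i \<and> b = B ! j \<and>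
      (c < d - 1 \<or> (i < j \<and> c = d - 1))}"

definition CQ :: "nat \<Rightarrow> (nat \<times> nat) list list \<Rightarrow> config set" where
  "CQ d Q = {Z. \<forall>x\<in>RQ d Q. Z (fst x) (snd (snd x)) \<le> Z (fst (snd x)) (snd (snd x))}"

lemma closed_CQ: "closedin ambient_top (CQ d Q)"
  unfolding CQ_def by (rule closed_le_set)

lemma wit_CQ:
  assumes "goodZ d Z A" "rpA A Q"
  shows "witnessed d Z Q \<longleftrightarrow> Z \<in> CQ d Q"
proof
  assume w: "witnessed d Z Q"
  show "Z \<in> CQ d Q" unfolding CQ_def
  proof (intro CollectI ballI)
    fix x assume "x \<in> RQ d Q"
    then obtain B i j c where x: "x = (B ! i, B ! j, c)" "B \<in> set Q" "i < length B" "j < length B"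
      "c < d - 1 \<or> (i < j \<and> c = d - 1)" by (auto simp: RQ_def)
    have sz: "same_zeta d (Z (B ! i)) (Z (B ! j))" using w x by (auto simp: witnessed_def)
    have st: "sorted_wrt (\<lambda>a b. pr_t d (Z a) < pr_t d (Z b)) B" using w x by (auto simp: witnessed_def)
    show "Z (fst x) (snd (snd x)) \<le> Z (fst (snd x)) (snd (snd x))"
    proof (cases "c < d - 1")
      case True then show ?thesis using sz x by (simp add: same_zeta_def)
    next
      case False
      then have "i < j" "c = d - 1" using x by auto
      then have "pr_t d (Z (B ! i)) < pr_t d (Z (B ! j))" using st x sorted_wrt_nth_less by blast
      then show ?thesis using x \<open>c = d - 1\<close> by (simp add: pr_t_def)
    qed
  qed
next
  assume C: "Z \<in> CQ d Q"
  have le: "Z (B ! i) c \<le> Z (B ! j) c" if "B \<in> set Q" "i < length B" "j < length B"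
    "c < d - 1 \<or> (i < j \<and> c = d - 1)" for B i j c
  proof -
    have "(B ! i, B ! j, c) \<in> RQ d Q" using that by (auto simp: RQ_def)
    then show ?thesis using C by (auto simp: CQ_def)
  qed
  show "witnessed d Z Q" unfolding witnessed_def
  proof (rule ballI, rule conjI)
    fix B assume B: "B \<in> set Q"
    have sz: "same_zeta d (Z (B ! i)) (Z (B ! j))" if "i < length B" "j < length B" for i j
      unfolding same_zeta_def
    proof (intro allI impI)
      fix c assume "c < d - 1"
      then show "Z (B ! i) c = Z (B ! j) c" using le[OF B that] le[OF B that(2,1)] by force
    qed
    show "\<forall>a\<in>set B. \<forall>b\<in>set B. same_zeta d (Z a) (Z b)"
    proof (intro ballI)
      fix a b assume "a \<in> set B" "b \<in> set B"
      then obtain i j where "i < length B" "a = B ! i" "j < length B" "b = B ! j"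
        by (auto simp: in_set_conv_nth)
      then show "same_zeta d (Z a) (Z b)" using sz by simp
    qed
    have db: "distinct B \<and> set B \<subseteq> A" using rpA_block[OF assms(2) B] .
    show "sorted_wrt (\<lambda>a b. pr_t d (Z a) < pr_t d (Z b)) B"
      unfolding sorted_wrt_iff_nth_less
    proof (intro allI impI)
      fix i j assume ij: "i < j" "j < length B"
      have "pr_t d (Z (B ! i)) \<le> pr_t d (Z (B ! j))" using le[OF B _ ij(2), of i "d - 1"] ij
        by (simp add: pr_t_def)
      moreover have "B ! i \<noteq> B ! j" using db ij nth_eq_iff_index_eq by fastforce
      moreover have "B ! i \<in> A" "B ! j \<in> A" using db ij nth_mem by (fastforce, fastforce)
      ultimately show "pr_t d (Z (B ! i)) < pr_t d (Z (B ! j))"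
        using assms(1) sz[of i j] ij unfolding goodZ_def by fastforce
    qed
  qed
qed

theorem lemma3p12:
  fixes p q r :: nat and k :: "nat \<Rightarrow> nat" and \<sigma> :: "nat \<Rightarrow> nat \<Rightarrow> nat" and lam :: "nat list"
  assumes "1 \<le> q"
    and "\<forall>i. 1 \<le> i \<and> i \<le> r \<longrightarrow> 1 \<le> k i"
    and "q = 1 \<longrightarrow> (\<forall>i. 1 \<le> i \<and> i \<le> r \<longrightarrow> \<sigma> i permutes {1..k i})"
    and "lam \<in> Pk r k"
  shows "closedin
           (Alexandroff_compactification (subtopology ambient_top (Vspace p q r k \<sigma>)))
           (F_lambda p q r k \<sigma> lam)"
proof -
  define d where "d = p + q"
  define V where "V = Vspace p q r k \<sigma>"
  have VV: "V \<subseteq> Vtilde p q r k" by (auto simp: V_def Vspace_def Vtilde_comp_def)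
  have good: "goodZ d Z (table r k)" if "Z \<in> V" for Z
    using good_V[OF _ assms(1)] VV that by (auto simp: d_def)
  define S where "S = {Z\<in>V. weight_le lam (weight (QZ d r k Z))}"
  define QS where "QS = {Q. ray_partition r k Q \<and> weight_le lam (weight Q)}"
  have S_eq: "S = (\<Union>(CQ d ` QS)) \<inter> V"
  proof (intro equalityI subsetI)
    fix Z assume Z: "Z \<in> S"
    then have ZV: "Z \<in> V" by (simp add: S_def)
    note P = QZ_props[OF finite_table good[OF ZV]]
    have "QZ d r k Z \<in> QS" using P Z by (simp add: QS_def S_def)
    moreover have "Z \<in> CQ d (QZ d r k Z)"
      using wit_CQ[OF good[OF ZV], of "QZ d r k Z"] P by (simp add: rp_eq)
    ultimately show "Z \<in> (\<Union>(CQ d ` QS)) \<inter> V" using ZV by blast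
  next
    fix Z assume Z: "Z \<in> (\<Union>(CQ d ` QS)) \<inter> V"
    then obtain Q where Q: "Q \<in> QS" "Z \<in> CQ d Q" and ZV: "Z \<in> V" by blast
    note P = QZ_props[OF finite_table good[OF ZV]]
    have rpQ: "ray_partition r k Q" using Q by (simp add: QS_def)
    have "witnessed d Z Q" using wit_CQ[OF good[OF ZV], of Q] rpQ Q(2) by (simp add: rp_eq)
    then have "weight_le (weight Q) (weight (QZ d r k Z))" using P rpQ by blast
    then have "weight_le lam (weight (QZ d r k Z))" using Q(1) weight_le_trans by (auto simp: QS_def)
    then show "Z \<in> S" using ZV by (simp add: S_def)
  qed
  have "finite QS" using fin_rp by (rule finite_subset[rotated]) (auto simp: QS_def)
  then have "closedin ambient_top (\<Union>(CQ d ` QS))"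
    by (intro closedin_Union) (auto simp: closed_CQ)
  then have cS: "closedin (subtopology ambient_top V) S"
    unfolding closedin_subtopology S_eq by blast
  have top: "topspace (subtopology ambient_top V) = V" by simp
  have oS: "openin (subtopology ambient_top V) (V - S)"
    using cS unfolding closedin_def top by blast
  have SV: "S \<subseteq> V" by (auto simp: S_def)
  have F: "F_lambda p q r k \<sigma> lam = insert None (Some ` S)"
    by (simp add: F_lambda_def S_def V_def d_def)
  have "F_lambda p q r k \<sigma> lam = topspace (Alexandroff_compactification (subtopology ambient_top V)) - Some ` (V - S)"
    unfolding F topspace_Alexandroff_compactification top using SV by auto
  then show ?thesis unfolding closedin_Alexandroff_compactification V_def[symmetric]
    using oS by (intro disjI2 exI[of _ "V - S"] conjI)
qed

end
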